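(* Let $h\ge0$ be a measurable function on $\mathbb R_+$ and let $\alpha=\{\alpha_n\}_{n\ge0}$ be a sequence with $\alpha_n\in[3,4]$ for all $n$, such that $[h,\alpha]<\infty$. Then $[h]_{2,\ell^1}<\infty$ (i.e. $h\in A_2(\mathbb R_+,\ell^1)$), and $[h]_{2,\ell^1}\le c\,[h,\alpha]$ for an absolute constant $c$.
   Context: For a nonnegative $f$ and a set $E$ of positive measure, $\langle f\rangle_E=\frac1{|E|}\int_Ef\,dx$. For $x,y\ge0$, $I_{x,y}=[x,x+y)$. For $h\ge0$ on $\mathbb R_+$ and a sequence $\alpha=\{\alpha_n\}$ of positive numbers, $[h,\alpha]=\sum_{n=0}^\infty\big(\langle h\rangle_{I_{n,\alpha_n}}\langle h^{-1}\rangle_{I_{n,\alpha_n}}-1\big)\in[0,\infty]$. $[h]_{2,\ell^1}=[h,\mathbf 2]$, where $\mathbf 2$ is the constant sequence $2,2,\dots$; $A_2(\mathbb R_+,\ell^1)$ is the class of $h\ge0$ with $[h]_{2,\ell^1}<\infty$. *)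

theory Defs
  imports "HOL-Analysis.Analysis"
begin

definition avg :: "(real \<Rightarrow> ennreal) \<Rightarrow> real set \<Rightarrow> ennreal" where
  "avg f E = (\<integral>\<^sup>+ x\<in>E. f x \<partial>lborel) / emeasure lborel E"

definition Ivl :: "real \<Rightarrow> real \<Rightarrow> real set" where
  "Ivl x y = {x..<x+y}"

text \<open>[h,alpha] in [0,\<infinity>]; h^{-1} is taken in [0,\<infinity>] (so 1/0 = \<infinity>).\<close>
definition bracket :: "(real \<Rightarrow> real) \<Rightarrow> (nat \<Rightarrow> real) \<Rightarrow> ennreal" where
  "bracket h \<alpha> = (\<Sum>n. avg (\<lambda>x. ennreal (h x)) (Ivl (real n) (\<alpha> n))
                       * avg (\<lambda>x. inverse (ennreal (h x))) (Ivl (real n) (\<alpha> n)) - 1)"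

definition A2_l1_const :: "(real \<Rightarrow> real) \<Rightarrow> ennreal" where
  "A2_l1_const h = bracket h (\<lambda>_. 2)"

end

theory Submission imports Defs begin

lemma ttrick:
  fixes h :: "real \<Rightarrow> real"
  assumes hm[measurable]: "h \<in> borel_measurable lborel" and hp: "\<And>x. h x \<ge> 0" and t: "t > 0"
    and E[measurable]: "E \<in> sets lborel"
  shows "ennreal (2*t) * emeasure lborel E \<le>
     (\<integral>\<^sup>+x\<in>E. ennreal (h x) \<partial>lborel) + ennreal (t^2) * (\<integral>\<^sup>+x\<in>E. inverse (ennreal (h x)) \<partial>lborel)"
proof -
  have pw: "ennreal (2*t) \<le> ennreal (h x) + ennreal (t^2) * inverse (ennreal (h x))" for x
  proof (cases "h x = 0")
    case True then show ?thesis using t by simp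
  next
    case False
    then have hx: "h x > 0" using hp[of x] by linarith
    have "inverse (ennreal (h x)) = ennreal (1 / h x)" using hx by (simp add: inverse_ennreal inverse_eq_divide)
    moreover have "2*t \<le> h x + t^2 * (1 / h x)"
    proof -
      have "0 \<le> (h x - t)^2" by simp
      then have "2*t*h x \<le> h x * h x + t^2" by (simp add: power2_eq_square algebra_simps)
      then show ?thesis using hx by (simp add: field_simps power2_eq_square)
    qed
    ultimately show ?thesis using hx t
      by (simp add: ennreal_mult''[symmetric] ennreal_plus[symmetric] del: ennreal_plus)
  qed
  have "ennreal (2*t) * emeasure lborel E = (\<integral>\<^sup>+x\<in>E. ennreal (2*t) \<partial>lborel)"
    by (rule nn_integral_cmult_indicator[symmetric]) (use E in simp)
  also have "\<dots> \<le> (\<integral>\<^sup>+x\<in>E. (ennreal (h x) + ennreal (t^2) * inverse (ennreal (h x))) \<partial>lborel)"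
    by (intro nn_integral_mono) (auto intro: mult_right_mono pw)
  also have "\<dots> = (\<integral>\<^sup>+x. (ennreal (h x) * indicator E x + ennreal (t^2) * (inverse (ennreal (h x)) * indicator E x)) \<partial>lborel)"
    by (intro nn_integral_cong) (simp add: distrib_right mult.assoc)
  also have "\<dots> = (\<integral>\<^sup>+x\<in>E. ennreal (h x) \<partial>lborel) + ennreal (t^2) * (\<integral>\<^sup>+x\<in>E. inverse (ennreal (h x)) \<partial>lborel)"
    by (simp add: nn_integral_add nn_integral_cmult)
  finally show ?thesis .
qed

lemma cs_real:
  fixes a b m :: real
  assumes "a \<ge> 0" "b \<ge> 0" "m > 0"
    and H: "\<And>t. t > 0 \<Longrightarrow> 2*t*m \<le> a + t^2 * b"
  shows "m^2 \<le> a*b"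
proof -
  have a0: "a > 0"
  proof (rule ccontr)
    assume "\<not> a > 0" then have "a = 0" using assms by simp
    have "t > 0" if "t = m/(b+1)" for t using assms that by simp
    define t where "t = m/(b+1)"
    have tp: "t > 0" using assms by (simp add: t_def)
    have "2*t*m \<le> t^2*b" using H[OF tp] \<open>a=0\<close> by simp
    then have "2*m \<le> t*b" using tp by (simp add: power2_eq_square)
    moreover have "t*b < m" using assms by (simp add: t_def field_simps)
    ultimately show False using assms by linarith
  qed
  have b0: "b > 0"
  proof (rule ccontr)
    assume "\<not> b > 0" then have "b = 0" using assms by simp
    define t where "t = (a+1)/m"
    have tp: "t > 0" using assms by (simp add: t_def)
    have "2*t*m \<le> a" using H[OF tp] \<open>b=0\<close> by simp
    moreover have "t*m = a+1" using assms by (simp add: t_def)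
    ultimately show False using assms by linarith
  qed
  define t where "t = sqrt (a/b)"
  have tp: "t > 0" using a0 b0 by (simp add: t_def)
  have t2: "t^2 * b = a" using a0 b0 by (simp add: t_def)
  have "2*t*m \<le> 2*a" using H[OF tp] t2 by simp
  then have "t*m \<le> a" by simp
  then have "(t*m)^2 \<le> a^2" using tp assms by (intro power_mono) auto
  then have "b*(t*m)^2 \<le> b*a^2" using b0 by (intro mult_left_mono) auto
  moreover have "b*(t*m)^2 = a*m^2" using t2 by (simp add: power_mult_distrib algebra_simps)
  ultimately have "a*m^2 \<le> b*a^2" by linarith
  also have "\<dots> = a*(a*b)" by (simp add: power2_eq_square)
  finally have "a*m^2 \<le> a*(a*b)" .
  then show ?thesis using a0 by simp
qed


lemma real_key:
  fixes aJ aK bJ bK L :: real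
  assumes "aJ \<ge> 0" "aK \<ge> 0" "bJ \<ge> 0" "bK \<ge> 0" "3 \<le> L" "L \<le> 4"
    and cJ: "4 \<le> aJ*bJ" and cK: "(L-2)^2 \<le> aK*bK"
  shows "aJ*bJ/4 - 1 \<le> 4*((aJ+aK)*(bJ+bK)/L^2 - 1)"
proof -
  define x where "x = aJ*bK"
  define y where "y = aK*bJ"
  have x0: "x \<ge> 0" "y \<ge> 0" using assms by (auto simp: x_def y_def)
  have "x*y = (aJ*bJ)*(aK*bK)" by (simp add: x_def y_def algebra_simps)
  also have "\<dots> \<ge> 4*(L-2)^2" using cJ cK assms by (intro mult_mono) auto
  finally have xy: "4*(L-2)^2 \<le> x*y" .
  have "(x+y)^2 \<ge> 4*(x*y)" using sum_squares_ge_zero[of "x-y" 0]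
    by (simp add: power2_eq_square algebra_simps)
  then have "(4*(L-2))^2 \<le> (x+y)^2" using xy by (simp add: power2_eq_square algebra_simps)
  then have cross: "4*(L-2) \<le> x+y" using x0 assms by (meson abs_le_square_iff abs_of_nonneg le_add_same_cancel1 order_trans power2_le_imp_le)
  define P where "P = (aJ+aK)*(bJ+bK)"
  have P: "P = aJ*bJ + (x+y) + aK*bK" by (simp add: P_def x_def y_def algebra_simps)
  have PL: "aJ*bJ - 4 \<le> P - L^2" using P cross cK by (simp add: power2_eq_square algebra_simps)
  have L2: "0 < L^2" "L^2 \<le> 16" using assms by (auto simp: power2_eq_square intro: mult_mono[of L 4 L 4, simplified])
  have "(P - L^2)/4 \<le> 4*(P - L^2)/L^2"
  proof -
    have "0 \<le> P - L^2" using PL cJ by linarith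
    then have "(P-L^2)*L^2 \<le> (P-L^2)*16" using L2 by (intro mult_left_mono) auto
    then show ?thesis using L2 by (simp add: field_simps)
  qed
  moreover have "4*((aJ+aK)*(bJ+bK)/L^2 - 1) = 4*(P - L^2)/L^2" using L2 by (simp add: P_def field_simps)
  ultimately show ?thesis using PL by (simp add: field_simps)
qed


lemma cs_int:
  fixes h :: "real \<Rightarrow> real"
  assumes hm[measurable]: "h \<in> borel_measurable lborel" and hp: "\<And>x. h x \<ge> 0"
    and E[measurable]: "E \<in> sets lborel" and Em: "emeasure lborel E = ennreal m" "m > 0"
    and A: "(\<integral>\<^sup>+x\<in>E. ennreal (h x) \<partial>lborel) = ennreal a" "a \<ge> 0"
    and B: "(\<integral>\<^sup>+x\<in>E. inverse (ennreal (h x)) \<partial>lborel) = ennreal b" "b \<ge> 0"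
  shows "m^2 \<le> a*b"
proof (rule cs_real)
  show "a \<ge> 0" "b \<ge> 0" "m > 0" using A B Em by auto
  fix t :: real assume t: "t > 0"
  have "ennreal (2*t) * ennreal m \<le> ennreal a + ennreal (t^2) * ennreal b"
    using ttrick[OF hm hp t E] Em A B by simp
  then have "ennreal (2*t*m) \<le> ennreal (a + t^2*b)"
    using t A B Em by (simp add: ennreal_mult''[symmetric] ennreal_plus[symmetric] del: ennreal_plus)
  then show "2*t*m \<le> a + t^2*b" using A B t by (subst (asm) ennreal_le_iff) auto
qed

lemma pos_inv_int:
  fixes h :: "real \<Rightarrow> real"
  assumes hm[measurable]: "h \<in> borel_measurable lborel"
    and E[measurable]: "E \<in> sets lborel" and Em: "emeasure lborel E \<noteq> 0"
  shows "(\<integral>\<^sup>+x\<in>E. inverse (ennreal (h x)) \<partial>lborel) \<noteq> 0"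
proof
  assume "(\<integral>\<^sup>+x\<in>E. inverse (ennreal (h x)) \<partial>lborel) = 0"
  then have "AE x in lborel. inverse (ennreal (h x)) * indicator E x = 0"
    by (subst (asm) nn_integral_0_iff_AE) auto
  then have "AE x in lborel. x \<notin> E"
    by (rule AE_mp) (auto intro!: AE_I2 simp: indicator_def)
  then have "emeasure lborel E = 0"
    by (subst (asm) AE_iff_measurable[of E]) (use E in auto)
  then show False using Em by simp
qed


lemma key:
  fixes h :: "real \<Rightarrow> real"
  assumes hm[measurable]: "h \<in> borel_measurable lborel" and hp: "\<And>x. h x \<ge> 0"
    and L: "3 \<le> L" "L \<le> 4"
  shows "avg (\<lambda>x. ennreal (h x)) (Ivl s 2) * avg (\<lambda>x. inverse (ennreal (h x))) (Ivl s 2) - 1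
     \<le> 4 * (avg (\<lambda>x. ennreal (h x)) (Ivl s L) * avg (\<lambda>x. inverse (ennreal (h x))) (Ivl s L) - 1)"
proof -
  define J where "J = {s..<s+2}"
  define K where "K = {s+2..<s+L}"
  define I where "I = {s..<s+L}"
  have msets[measurable]: "J \<in> sets lborel" "K \<in> sets lborel" "I \<in> sets lborel" by (auto simp: J_def K_def I_def)
  have mJ: "emeasure lborel J = ennreal 2" by (simp add: J_def)
  have mK: "emeasure lborel K = ennreal (L-2)" using L by (simp add: K_def)
  have mI: "emeasure lborel I = ennreal L" using L by (simp add: I_def)
  have IJK: "I = J \<union> K" "J \<inter> K = {}" using L by (auto simp: I_def J_def K_def)
  define AJ where "AJ = (\<integral>\<^sup>+x\<in>J. ennreal (h x) \<partial>lborel)"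
  define AK where "AK = (\<integral>\<^sup>+x\<in>K. ennreal (h x) \<partial>lborel)"
  define AI where "AI = (\<integral>\<^sup>+x\<in>I. ennreal (h x) \<partial>lborel)"
  define BJ where "BJ = (\<integral>\<^sup>+x\<in>J. inverse (ennreal (h x)) \<partial>lborel)"
  define BK where "BK = (\<integral>\<^sup>+x\<in>K. inverse (ennreal (h x)) \<partial>lborel)"
  define BI where "BI = (\<integral>\<^sup>+x\<in>I. inverse (ennreal (h x)) \<partial>lborel)"
  have AI: "AI = AJ + AK" unfolding AI_def AJ_def AK_def IJK(1)
    by (rule nn_integral_disjoint_pair) (use IJK msets in auto)
  have BI: "BI = BJ + BK" unfolding BI_def BJ_def BK_def IJK(1)
    by (rule nn_integral_disjoint_pair) (use IJK msets in auto)
  have avg: "avg (\<lambda>x. ennreal (h x)) (Ivl s 2) * avg (\<lambda>x. inverse (ennreal (h x))) (Ivl s 2)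
      = AJ * BJ * ennreal (1/4)"
  proof -
    have "avg (\<lambda>x. ennreal (h x)) (Ivl s 2) = AJ * ennreal (1/2)"
      unfolding avg_def AJ_def Ivl_def J_def[symmetric] mJ
      by (simp add: divide_ennreal_def inverse_ennreal)
    moreover have "avg (\<lambda>x. inverse (ennreal (h x))) (Ivl s 2) = BJ * ennreal (1/2)"
      unfolding avg_def BJ_def Ivl_def J_def[symmetric] mJ
      by (simp add: divide_ennreal_def inverse_ennreal)
    moreover have "ennreal (1/4) = ennreal (1/2) * ennreal (1/2)"
      using ennreal_mult''[of "1/2" "1/2"] by simp
    ultimately show ?thesis by (simp add: mult_ac)
  qed
  have avgI: "avg (\<lambda>x. ennreal (h x)) (Ivl s L) * avg (\<lambda>x. inverse (ennreal (h x))) (Ivl s L)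
      = AI * BI * ennreal (1/L^2)"
  proof -
    have "avg (\<lambda>x. ennreal (h x)) (Ivl s L) = AI * ennreal (1/L)"
      unfolding avg_def AI_def Ivl_def I_def[symmetric] mI
      using L by (simp add: divide_ennreal_def inverse_ennreal inverse_eq_divide)
    moreover have "avg (\<lambda>x. inverse (ennreal (h x))) (Ivl s L) = BI * ennreal (1/L)"
      unfolding avg_def BI_def Ivl_def I_def[symmetric] mI
      using L by (simp add: divide_ennreal_def inverse_ennreal inverse_eq_divide)
    ultimately show ?thesis using L by (simp add: ennreal_mult''[symmetric] mult_ac power2_eq_square)
  qed
  show ?thesis
    unfolding avg avgI
  proof (cases "AI = 0")
    case True
    then have "AJ = 0" using AI by simp
    then show "AJ * BJ * ennreal (1/4) - 1 \<le> 4 * (AI * BI * ennreal (1 / L\<^sup>2) - 1)" by simp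
  next
    case AI0: False
    have BI0: "BI \<noteq> 0" unfolding BI_def using mI L msets by (intro pos_inv_int) auto
    show "AJ * BJ * ennreal (1/4) - 1 \<le> 4 * (AI * BI * ennreal (1 / L\<^sup>2) - 1)"
    proof (cases "AI = top \<or> BI = top")
      case True
      then have "AI * BI * ennreal (1 / L\<^sup>2) = top" using AI0 BI0 L
        by (auto simp: ennreal_mult_eq_top_iff)
      then show ?thesis by simp
    next
      case False
      then have fin: "AJ \<noteq> top" "AK \<noteq> top" "BJ \<noteq> top" "BK \<noteq> top" using AI BI by auto
      obtain aJ where aJ: "AJ = ennreal aJ" "aJ \<ge> 0" using fin(1) by (cases AJ) auto
      obtain aK where aK: "AK = ennreal aK" "aK \<ge> 0" using fin(2) by (cases AK) auto
      obtain bJ where bJ: "BJ = ennreal bJ" "bJ \<ge> 0" using fin(3) by (cases BJ) auto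
      obtain bK where bK: "BK = ennreal bK" "bK \<ge> 0" using fin(4) by (cases BK) auto
      have cJ: "2^2 \<le> aJ*bJ"
        by (rule cs_int[OF hm hp _ mJ _ aJ(1)[unfolded AJ_def] aJ(2) bJ(1)[unfolded BJ_def] bJ(2)]) (use msets in auto)
      have cK: "(L-2)^2 \<le> aK*bK"
        by (rule cs_int[OF hm hp _ mK _ aK(1)[unfolded AK_def] aK(2) bK(1)[unfolded BK_def] bK(2)]) (use L msets in auto)
      have r: "aJ*bJ/4 - 1 \<le> 4*((aJ+aK)*(bJ+bK)/L^2 - 1)"
        by (rule real_key) (use aJ aK bJ bK L cJ cK in auto)
      have "AJ * BJ * ennreal (1/4) - 1 = ennreal (aJ*bJ/4 - 1)"
        using aJ bJ by (simp add: ennreal_mult''[symmetric] ennreal_minus[symmetric] del: ennreal_minus)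
      moreover have "4 * (AI * BI * ennreal (1 / L\<^sup>2) - 1) = ennreal (4*((aJ+aK)*(bJ+bK)/L^2 - 1))"
      proof -
        have "AI * BI * ennreal (1 / L\<^sup>2) = ennreal ((aJ+aK)*(bJ+bK)/L^2)"
          using aJ bJ aK bK L
          by (simp add: AI BI ennreal_plus[symmetric] ennreal_mult''[symmetric] del: ennreal_plus)
        then have "AI * BI * ennreal (1 / L\<^sup>2) - 1 = ennreal ((aJ+aK)*(bJ+bK)/L^2 - 1)"
          using ennreal_minus[of 1 "(aJ+aK)*(bJ+bK)/L^2"] by simp
        then show ?thesis using ennreal_mult'[of 4 "(aJ+aK)*(bJ+bK)/L^2 - 1"] by simp
      qed
      ultimately show ?thesis using r by (simp add: ennreal_leI)
    qed
  qed
qed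


lemma avg_cong: "(\<And>x. x \<in> E \<Longrightarrow> f x = g x) \<Longrightarrow> avg f E = avg g E"
  unfolding avg_def by (auto intro!: nn_integral_cong arg_cong2[where f="(/)"] simp: indicator_def)

theorem proposition4p1:
  shows "\<exists>c::real. c > 0 \<and>
    (\<forall>(h::real \<Rightarrow> real) (\<alpha>::nat \<Rightarrow> real).
       h \<in> borel_measurable (restrict_space lborel {0..}) \<longrightarrow>
       (\<forall>x\<ge>0. h x \<ge> 0) \<longrightarrow>
       (\<forall>n. 3 \<le> \<alpha> n \<and> \<alpha> n \<le> 4) \<longrightarrow>
       bracket h \<alpha> < \<infinity> \<longrightarrow>
       A2_l1_const h < \<infinity> \<and> A2_l1_const h \<le> ennreal c * bracket h \<alpha>)"
proof (intro exI[of _ 4] conjI allI impI)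
  show "(0::real) < 4" by simp
  fix h :: "real \<Rightarrow> real" and \<alpha> :: "nat \<Rightarrow> real"
  assume hm: "h \<in> borel_measurable (restrict_space lborel {0..})"
    and hp: "\<forall>x\<ge>0. h x \<ge> 0" and al: "\<forall>n. 3 \<le> \<alpha> n \<and> \<alpha> n \<le> 4"
    and fin: "bracket h \<alpha> < \<infinity>"
  define h' where "h' = (\<lambda>x. indicator {0..} x *\<^sub>R h x)"
  have hm': "h' \<in> borel_measurable lborel"
    unfolding h'_def using hm by (subst (asm) borel_measurable_restrict_space_iff) auto
  have hp': "h' x \<ge> 0" for x using hp by (auto simp: h'_def indicator_def)
  have eqf: "avg (\<lambda>x. ennreal (h x)) (Ivl (real n) c) = avg (\<lambda>x. ennreal (h' x)) (Ivl (real n) c)"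
    and eqg: "avg (\<lambda>x. inverse (ennreal (h x))) (Ivl (real n) c) = avg (\<lambda>x. inverse (ennreal (h' x))) (Ivl (real n) c)"
    for n c
    by (rule avg_cong; auto simp: h'_def Ivl_def)+
  have le: "A2_l1_const h \<le> ennreal 4 * bracket h \<alpha>"
  proof -
    have "A2_l1_const h = (\<Sum>n. avg (\<lambda>x. ennreal (h' x)) (Ivl (real n) 2) * avg (\<lambda>x. inverse (ennreal (h' x))) (Ivl (real n) 2) - 1)"
      unfolding A2_l1_const_def bracket_def by (simp add: eqf eqg)
    also have "\<dots> \<le> (\<Sum>n. 4 * (avg (\<lambda>x. ennreal (h' x)) (Ivl (real n) (\<alpha> n)) * avg (\<lambda>x. inverse (ennreal (h' x))) (Ivl (real n) (\<alpha> n)) - 1))"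
      by (intro suminf_le summableI key[OF hm' hp']) (use al in auto)
    also have "\<dots> = 4 * bracket h \<alpha>"
      unfolding bracket_def using al by (simp add: eqf eqg)
    finally show ?thesis by simp
  qed
  then show "A2_l1_const h \<le> ennreal 4 * bracket h \<alpha>" .
  have "ennreal 4 * bracket h \<alpha> < \<infinity>" using fin by (simp add: ennreal_mult_less_top)
  then show "A2_l1_const h < \<infinity>" using le by (meson le_less_trans)
qed

end
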